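(* Let $\delta\in(0,1)$, $\epsilon>0$, $\gamma^*\ge0$, and consider the progressive sampling algorithm PS-REG (described in the context) run on a simulation-based game with these parameters. If PS-REG returns an empirical utility function $\hat u$, then with probability at least $1-\delta$ it holds that $E(u)\subseteq E_{2\epsilon}(\hat u)$ and $E_\gamma(\hat u)\subseteq E_{2\epsilon+\gamma}(u)$ for all $0\le\gamma\le\gamma^*$, where $u$ is the true utility function.
   Context: Games. A normal-form game has a finite set of players $P$, finite pure strategy sets $S_p$, pure profile space $\mathbf{S}=\prod_pS_p$ and utility $u:\mathbf{S}\to\mathbb{R}^{|P|}$. For a profile $s$ and player $p$, $A_{p,s}$ is the set of pure profiles obtained from $s$ by replacing $p$'s strategy by any $t\in S_p$. $\mathrm{Reg}_p(s;u)=\sup_{s'\in A_{p,s}}u_p(s')-u_p(s)$, $\mathrm{Reg}(s;u)=\max_p\mathrm{Reg}_p(s;u)$; $E_\gamma(u)=\{s\in\mathbf{S}:\mathrm{Reg}(s;u)\le\gamma\}$, $E(u)=E_0(u)$. Simulation-based game: a simulator which, queried at a pure profile $s$, returns an independent random utility vector with coordinates in $[a_s,b_s]$; $c=\sup_s(b_s-a_s)$; the true utility $u(s)$ is the expected simulator output. Index set $\mathcal{I}=P\times\mathbf{S}$. Progressive sampling algorithm: schedule $m_1,\dots,m_T$, $M_t=m_1+\dots+m_t$. All indices start active. At iteration $t$, for each active $(p,s)$, draw $m_t$ fresh samples of $p$'s utility at $s$, let $\hat u^{(t)}_p(s)$ be the mean of all $M_t$ samples, and compute a deviation bound $\hat\epsilon^{(t)}_p(s)$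 with $|u_p(s)-\hat u^{(t)}_p(s)|\le\hat\epsilon^{(t)}_p(s)$ with probability at least $1-\delta/(|\mathcal{I}|T)$. Pruned indices are no longer sampled and retain their last values. After pruning, if no index is active the algorithm returns $\hat u=\hat u^{(t)}$; if the schedule is exhausted with active indices it returns nothing. PS-REG uses uniform deviation bounds (a single scalar $\hat\epsilon^{(t)}$ at iteration $t$ serving as the bound of every index). At iteration $t$ it prunes an active index $(p,s)$ if $\hat\epsilon^{(t)}\le\epsilon$ (well-estimated pruning) or if $\mathrm{Reg}_p(s;\hat u^{(t)})>\max\{2\hat\epsilon^{(t)},\ \gamma^*+\epsilon+\hat\epsilon^{(t)}\}$ (regret pruning). *)

theory Defs
  imports "HOL-Probability.Probability"
begin

text \<open>Players form a finite type 'p; Sp p is the strategy set of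
player p; a pure profile is a function 'p => 's with s p in Sp p for all p.
Utilities are functions u :: 'p => ('p => 's) => real (u p s = u_p(s)).\<close>

definition profiles :: "('p \<Rightarrow> 's set) \<Rightarrow> ('p \<Rightarrow> 's) set" where
  "profiles Sp = PiE UNIV Sp"

definition adj :: "('p \<Rightarrow> 's set) \<Rightarrow> 'p \<Rightarrow> ('p \<Rightarrow> 's) \<Rightarrow> ('p \<Rightarrow> 's) set" where
  "adj Sp p s = (\<lambda>t. s(p := t)) ` Sp p"

definition RegP :: "('p \<Rightarrow> 's set) \<Rightarrow> ('p \<Rightarrow> ('p \<Rightarrow> 's) \<Rightarrow> real) \<Rightarrow> 'p \<Rightarrow> ('p \<Rightarrow> 's) \<Rightarrow> real" where
  "RegP Sp u p s = (SUP s'\<in>adj Sp p s. u p s') - u p s"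

definition Reg :: "('p::finite \<Rightarrow> 's set) \<Rightarrow> ('p \<Rightarrow> ('p \<Rightarrow> 's) \<Rightarrow> real) \<Rightarrow> ('p \<Rightarrow> 's) \<Rightarrow> real" where
  "Reg Sp u s = Max ((\<lambda>p. RegP Sp u p s) ` UNIV)"

definition Eq :: "('p::finite \<Rightarrow> 's set) \<Rightarrow> ('p \<Rightarrow> ('p \<Rightarrow> 's) \<Rightarrow> real) \<Rightarrow> real \<Rightarrow> ('p \<Rightarrow> 's) set" where
  "Eq Sp u \<gamma> = {s \<in> profiles Sp. Reg Sp u s \<le> \<gamma>}"

definition indices :: "('p \<Rightarrow> 's set) \<Rightarrow> ('p \<times> ('p \<Rightarrow> 's)) set" where
  "indices Sp = UNIV \<times> profiles Sp"

definition Msched :: "(nat \<Rightarrow> nat) \<Rightarrow> nat \<Rightarrow> nat" where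
  "Msched m t = (\<Sum>i=1..t. m i)"

text \<open>Empirical mean of the first M_t samples of p's utility at s; X k p s is the k-th
sample drawn for index (p,s) (fresh samples at iteration t are those with
M_{t-1} <= k < M_t).\<close>
definition emp_mean :: "(nat \<Rightarrow> nat) \<Rightarrow> (nat \<Rightarrow> 'p \<Rightarrow> ('p \<Rightarrow> 's) \<Rightarrow> real) \<Rightarrow> nat \<Rightarrow> 'p \<Rightarrow> ('p \<Rightarrow> 's) \<Rightarrow> real" where
  "emp_mean m x t p s = (\<Sum>k<Msched m t. x k p s) / real (Msched m t)"

text \<open>State of PS-REG after iteration t (for one realisation of the samples x and of the
uniform deviation bounds epsh): (set of active indices, current empirical utility table).\<close>
primrec psreg_state ::
  "('p::finite \<Rightarrow> 's set) \<Rightarrow> (nat \<Rightarrow> nat) \<Rightarrow> real \<Rightarrow> real \<Rightarrow>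
   (nat \<Rightarrow> 'p \<Rightarrow> ('p \<Rightarrow> 's) \<Rightarrow> real) \<Rightarrow> (nat \<Rightarrow> real) \<Rightarrow> nat \<Rightarrow>
   ('p \<times> ('p \<Rightarrow> 's)) set \<times> ('p \<Rightarrow> ('p \<Rightarrow> 's) \<Rightarrow> real)" where
  "psreg_state Sp m \<epsilon> \<gamma>s x epsh 0 = (indices Sp, (\<lambda>_ _. 0))"
| "psreg_state Sp m \<epsilon> \<gamma>s x epsh (Suc t) =
     (let (A, uh) = psreg_state Sp m \<epsilon> \<gamma>s x epsh t;
          uh' = (\<lambda>p s. if (p, s) \<in> A then emp_mean m x (Suc t) p s else uh p s);
          e = epsh (Suc t);
          pruned = {(p, s) \<in> A. e \<le> \<epsilon> \<or>
                        RegP Sp uh' p s > max (2 * e) (\<gamma>s + \<epsilon> + e)}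
      in (A - pruned, uh'))"

definition psreg ::
  "('p::finite \<Rightarrow> 's set) \<Rightarrow> (nat \<Rightarrow> nat) \<Rightarrow> nat \<Rightarrow> real \<Rightarrow> real \<Rightarrow>
   (nat \<Rightarrow> 'p \<Rightarrow> ('p \<Rightarrow> 's) \<Rightarrow> real) \<Rightarrow> (nat \<Rightarrow> real) \<Rightarrow> ('p \<Rightarrow> ('p \<Rightarrow> 's) \<Rightarrow> real) option" where
  "psreg Sp m T \<epsilon> \<gamma>s x epsh =
     (if \<exists>t\<in>{1..T}. fst (psreg_state Sp m \<epsilon> \<gamma>s x epsh t) = {}
      then Some (snd (psreg_state Sp m \<epsilon> \<gamma>s x epsh
                   (LEAST t. t \<in> {1..T} \<and> fst (psreg_state Sp m \<epsilon> \<gamma>s x epsh t) = {})))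
      else None)"

end

theory Submission
  imports Defs
begin


lemma adj_self: "s \<in> profiles Sp \<Longrightarrow> s \<in> adj Sp p s"
  unfolding adj_def profiles_def
  by (rule image_eqI[of _ _ "s p"]) auto

lemma adj_profiles: "s \<in> profiles Sp \<Longrightarrow> s' \<in> adj Sp p s \<Longrightarrow> s' \<in> profiles Sp"
  unfolding adj_def profiles_def by (auto simp: PiE_iff)

lemma adj_same: "s' \<in> adj Sp p s \<Longrightarrow> adj Sp p s' = adj Sp p s"
  unfolding adj_def by auto

lemma adj_finite: "finite (Sp p) \<Longrightarrow> finite (adj Sp p s)"
  unfolding adj_def by auto

lemma adj_ne: "Sp p \<noteq> {} \<Longrightarrow> adj Sp p s \<noteq> {}"
  unfolding adj_def by auto

lemma RegP_eq: "finite (Sp p) \<Longrightarrow> Sp p \<noteq> {} \<Longrightarrow>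
   RegP Sp f p s = Max (f p ` adj Sp p s) - f p s"
  unfolding RegP_def
  by (simp add: cSup_eq_Max adj_finite adj_ne)

lemma Reg_le: "Reg Sp f s \<le> c \<longleftrightarrow> (\<forall>p. RegP Sp f p s \<le> c)"
  unfolding Reg_def by (subst Max_le_iff) auto

lemma state_Suc:
  assumes "psreg_state Sp m \<epsilon> \<gamma>s x e t = (A, uh)"
  shows "psreg_state Sp m \<epsilon> \<gamma>s x e (Suc t) =
     (A - {(p, s) \<in> A. e (Suc t) \<le> \<epsilon> \<or>
            RegP Sp (\<lambda>p s. if (p, s) \<in> A then emp_mean m x (Suc t) p s else uh p s) p s
              > max (2 * e (Suc t)) (\<gamma>s + \<epsilon> + e (Suc t))},
      (\<lambda>p s. if (p, s) \<in> A then emp_mean m x (Suc t) p s else uh p s))"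
  using assms by (simp add: Let_def)

lemma inv:
  fixes Sp :: "'p::finite \<Rightarrow> 's set"
  assumes fin: "\<And>p. finite (Sp p)" and ne: "\<And>p. Sp p \<noteq> {}"
    and eps: "\<epsilon> > 0" and gs: "\<gamma>s \<ge> 0"
    and H: "\<And>t p s. t \<in> {1..T} \<Longrightarrow> s \<in> profiles Sp \<Longrightarrow>
        (p, s) \<in> fst (psreg_state Sp m \<epsilon> \<gamma>s x e (t - 1)) \<Longrightarrow>
        \<bar>u p s - emp_mean m x t p s\<bar> \<le> e t"
  shows "t \<le> T \<Longrightarrow> s \<in> profiles Sp \<Longrightarrow> (p, s) \<notin> fst (psreg_state Sp m \<epsilon> \<gamma>s x e t) \<Longrightarrow>
     \<bar>snd (psreg_state Sp m \<epsilon> \<gamma>s x e t) p s - u p s\<bar> \<le> \<epsilon> \<or>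
     (snd (psreg_state Sp m \<epsilon> \<gamma>s x e t) p s < Max (u p ` adj Sp p s) - \<gamma>s - \<epsilon> \<and>
      u p s < Max (u p ` adj Sp p s))"
proof (induction t arbitrary: p s)
  case 0
  then show ?case by (simp add: indices_def)
next
  case (Suc t)
  obtain A uh where st: "psreg_state Sp m \<epsilon> \<gamma>s x e t = (A, uh)" by (cases "psreg_state Sp m \<epsilon> \<gamma>s x e t")
  define uh' where "uh' = (\<lambda>p s. if (p, s) \<in> A then emp_mean m x (Suc t) p s else uh p s)"
  define e' where "e' = e (Suc t)"
  have stS: "psreg_state Sp m \<epsilon> \<gamma>s x e (Suc t) =
     (A - {(p, s) \<in> A. e' \<le> \<epsilon> \<or> RegP Sp uh' p s > max (2 * e') (\<gamma>s + \<epsilon> + e')}, uh')"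
    using state_Suc[OF st] unfolding uh'_def e'_def by simp
  have IH: "\<And>p s. s \<in> profiles Sp \<Longrightarrow> (p, s) \<notin> A \<Longrightarrow>
     \<bar>uh p s - u p s\<bar> \<le> \<epsilon> \<or> (uh p s < Max (u p ` adj Sp p s) - \<gamma>s - \<epsilon> \<and> u p s < Max (u p ` adj Sp p s))"
    using Suc.IH Suc.prems(1) st by fastforce
  have Ht: "\<And>p s. s \<in> profiles Sp \<Longrightarrow> (p, s) \<in> A \<Longrightarrow> \<bar>u p s - emp_mean m x (Suc t) p s\<bar> \<le> e'"
    using H[of "Suc t"] Suc.prems(1) st unfolding e'_def by fastforce
  show ?case
  proof (cases "(p, s) \<in> A")
    case False
    then show ?thesis using IH[OF Suc.prems(2) False] stS by (simp add: uh'_def)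
  next
    case True
    have pr: "e' \<le> \<epsilon> \<or> RegP Sp uh' p s > max (2 * e') (\<gamma>s + \<epsilon> + e')"
      using Suc.prems(3) True stS by auto
    have vs: "uh' p s = emp_mean m x (Suc t) p s" using True by (simp add: uh'_def)
    have es: "\<bar>u p s - uh' p s\<bar> \<le> e'" using Ht[OF Suc.prems(2) True] vs by simp
    show ?thesis
    proof (cases "e' \<le> \<epsilon>")
      case True
      then show ?thesis using es stS by auto
    next
      case False
      with pr have rp: "RegP Sp uh' p s > max (2 * e') (\<gamma>s + \<epsilon> + e')" by auto
      let ?U = "Max (u p ` adj Sp p s)"
      have bnd: "uh' p s' \<le> ?U + e'" if s': "s' \<in> adj Sp p s" for s'
      proof -
        have sp': "s' \<in> profiles Sp" using adj_profiles[OF Suc.prems(2) s'] .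
        have us': "u p s' \<le> ?U" using s' by (simp add: adj_finite fin)
        have U': "Max (u p ` adj Sp p s') = ?U" using adj_same[OF s'] by simp
        show ?thesis
        proof (cases "(p, s') \<in> A")
          case True
          then show ?thesis using Ht[OF sp' True] us' by (simp add: uh'_def abs_le_iff)
        next
          case nA: False
          then show ?thesis using IH[OF sp' nA] us' U' False eps gs by (auto simp: uh'_def abs_le_iff)
        qed
      qed
      have "Max (uh' p ` adj Sp p s) \<le> ?U + e'"
        using bnd by (subst Max_le_iff) (auto simp: adj_finite adj_ne fin ne)
      with rp have "uh' p s < ?U + e' - max (2 * e') (\<gamma>s + \<epsilon> + e')"
        by (simp add: RegP_eq fin ne max_def split: if_splits)
      then show ?thesis using es stS True by (auto simp: abs_le_iff)
    qed
  qed
qed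

lemma determ:
  fixes Sp :: "'p::finite \<Rightarrow> 's set"
  assumes fin: "\<And>p. finite (Sp p)" and ne: "\<And>p. Sp p \<noteq> {}"
    and eps: "\<epsilon> > 0" and gs: "\<gamma>s \<ge> 0"
    and H: "\<And>t p s. t \<in> {1..T} \<Longrightarrow> s \<in> profiles Sp \<Longrightarrow>
        (p, s) \<in> fst (psreg_state Sp m \<epsilon> \<gamma>s x e (t - 1)) \<Longrightarrow>
        \<bar>u p s - emp_mean m x t p s\<bar> \<le> e t"
    and res: "psreg Sp m T \<epsilon> \<gamma>s x e = Some uh"
  shows "Eq Sp u 0 \<subseteq> Eq Sp uh (2 * \<epsilon>) \<and>
        (\<forall>\<gamma>. 0 \<le> \<gamma> \<and> \<gamma> \<le> \<gamma>s \<longrightarrow> Eq Sp uh \<gamma> \<subseteq> Eq Sp u (2 * \<epsilon> + \<gamma>))"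
proof -
  let ?P = "\<lambda>t. t \<in> {1..T} \<and> fst (psreg_state Sp m \<epsilon> \<gamma>s x e t) = {}"
  have ex0: "\<exists>t\<in>{1..T}. fst (psreg_state Sp m \<epsilon> \<gamma>s x e t) = {}"
  proof (rule ccontr)
    assume "\<not> ?thesis"
    then have "psreg Sp m T \<epsilon> \<gamma>s x e = None" unfolding psreg_def by (simp only: if_False)
    with res show False by simp
  qed
  then have ex: "\<exists>t. ?P t" by blast
  have "psreg Sp m T \<epsilon> \<gamma>s x e = Some (snd (psreg_state Sp m \<epsilon> \<gamma>s x e (LEAST t. ?P t)))"
    unfolding psreg_def using ex0 by (simp only: if_True)
  with res have uh: "uh = snd (psreg_state Sp m \<epsilon> \<gamma>s x e (LEAST t. ?P t))" by simp
  define t0 where "t0 = (LEAST t. ?P t)"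
  have Pt0: "?P t0" unfolding t0_def by (rule LeastI_ex[OF ex])
  have P: "\<bar>uh p s - u p s\<bar> \<le> \<epsilon> \<or>
     (uh p s < Max (u p ` adj Sp p s) - \<gamma>s - \<epsilon> \<and> u p s < Max (u p ` adj Sp p s))"
    if "s \<in> profiles Sp" for p s
  proof -
    have "t0 \<le> T" using Pt0 by simp
    moreover have "(p, s) \<notin> fst (psreg_state Sp m \<epsilon> \<gamma>s x e t0)" using Pt0 by simp
    moreover have "uh = snd (psreg_state Sp m \<epsilon> \<gamma>s x e t0)" using uh unfolding t0_def .
    ultimately show ?thesis using inv[where T=T and m=m and x=x and e=e and u=u and Sp=Sp and t=t0 and s=s and p=p, OF fin ne eps gs H] that by blast
  qed
  have star: "\<exists>t\<in>adj Sp p s. u p t = Max (u p ` adj Sp p s)" for p s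
  proof -
    have "Max (u p ` adj Sp p s) \<in> u p ` adj Sp p s"
      by (rule Max_in) (auto simp: adj_finite adj_ne fin ne)
    then show ?thesis by force
  qed
  have upU: "u p s' \<le> Max (u p ` adj Sp p s)" if "s' \<in> adj Sp p s" for p s s'
    using that by (simp add: adj_finite fin)
  have uhU: "Max (uh p ` adj Sp p s) \<le> Max (u p ` adj Sp p s) + \<epsilon>" if sp: "s \<in> profiles Sp" for p s
  proof (subst Max_le_iff)
    show "\<forall>a\<in>uh p ` adj Sp p s. a \<le> Max (u p ` adj Sp p s) + \<epsilon>"
    proof
      fix a assume "a \<in> uh p ` adj Sp p s"
      then obtain s' where s': "s' \<in> adj Sp p s" "a = uh p s'" by auto
      show "a \<le> Max (u p ` adj Sp p s) + \<epsilon>"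
        using P[OF adj_profiles[OF sp s'(1)], of p] upU[OF s'(1)] adj_same[OF s'(1)] s'(2) eps gs
        by (auto simp: abs_le_iff)
    qed
  qed (auto simp: adj_finite adj_ne fin ne)
  have uhL: "Max (uh p ` adj Sp p s) \<ge> Max (u p ` adj Sp p s) - \<epsilon>" if sp: "s \<in> profiles Sp" for p s
  proof -
    obtain t where t: "t \<in> adj Sp p s" "u p t = Max (u p ` adj Sp p s)" using star by blast
    have "uh p t \<ge> Max (u p ` adj Sp p s) - \<epsilon>"
      using P[OF adj_profiles[OF sp t(1)], of p] t adj_same[OF t(1)] by (auto simp: abs_le_iff)
    moreover have "uh p t \<le> Max (uh p ` adj Sp p s)" using t(1) by (simp add: adj_finite fin)
    ultimately show ?thesis by linarith
  qed
  show ?thesis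
  proof (intro conjI allI impI subsetI)
    fix s assume "s \<in> Eq Sp u 0"
    then have sp: "s \<in> profiles Sp" and r: "\<And>p. RegP Sp u p s \<le> 0"
      unfolding Eq_def by (auto simp: Reg_le)
    show "s \<in> Eq Sp uh (2 * \<epsilon>)"
      unfolding Eq_def Reg_le
    proof (intro CollectI conjI allI sp)
      fix p
      have "u p s \<ge> Max (u p ` adj Sp p s)" using r[of p] by (simp add: RegP_eq fin ne)
      then have "uh p s \<ge> Max (u p ` adj Sp p s) - \<epsilon>" using P[OF sp, of p] by (auto simp: abs_le_iff)
      then show "RegP Sp uh p s \<le> 2 * \<epsilon>" using uhU[OF sp, of p] by (simp add: RegP_eq fin ne)
    qed
  next
    fix \<gamma> s assume g: "0 \<le> \<gamma> \<and> \<gamma> \<le> \<gamma>s" and "s \<in> Eq Sp uh \<gamma>"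
    then have sp: "s \<in> profiles Sp" and r: "\<And>p. RegP Sp uh p s \<le> \<gamma>"
      unfolding Eq_def by (auto simp: Reg_le)
    show "s \<in> Eq Sp u (2 * \<epsilon> + \<gamma>)"
      unfolding Eq_def Reg_le
    proof (intro CollectI conjI allI sp)
      fix p
      have "uh p s \<ge> Max (u p ` adj Sp p s) - \<epsilon> - \<gamma>"
        using r[of p] uhL[OF sp, of p] by (simp add: RegP_eq fin ne)
      then have "u p s \<ge> Max (u p ` adj Sp p s) - 2 * \<epsilon> - \<gamma>"
        using P[OF sp, of p] g by (auto simp: abs_le_iff)
      then show "RegP Sp u p s \<le> 2 * \<epsilon> + \<gamma>" by (simp add: RegP_eq fin ne)
    qed
  qed
qed


theorem theorem6:
  fixes M :: "'a measure"
    and Sp :: "'p::finite \<Rightarrow> 's set"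
    and X :: "nat \<Rightarrow> 'p \<Rightarrow> ('p \<Rightarrow> 's) \<Rightarrow> 'a \<Rightarrow> real"
    and epsh :: "nat \<Rightarrow> 'a \<Rightarrow> real"
    and u :: "'p \<Rightarrow> ('p \<Rightarrow> 's) \<Rightarrow> real"
    and a b :: "('p \<Rightarrow> 's) \<Rightarrow> real"
    and m :: "nat \<Rightarrow> nat" and T :: nat
    and \<delta> \<epsilon> \<gamma>s :: real
  assumes "prob_space M"
    and fin: "\<And>p. finite (Sp p)" and ne: "\<And>p. Sp p \<noteq> {}"
    and sched: "T \<ge> 1" "\<And>t. t \<in> {1..T} \<Longrightarrow> m t > 0"
    and delta: "0 < \<delta>" "\<delta> < 1" and eps: "\<epsilon> > 0" and gs: "\<gamma>s \<ge> 0"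
    and rv: "\<And>k p s. X k p s \<in> borel_measurable M"
    and epsh_rv: "\<And>t. epsh t \<in> borel_measurable M"
    and bounded: "\<And>k p s \<omega>. s \<in> profiles Sp \<Longrightarrow> \<omega> \<in> space M \<Longrightarrow>
                    a s \<le> X k p s \<omega> \<and> X k p s \<omega> \<le> b s"
    and mean: "\<And>k p s. s \<in> profiles Sp \<Longrightarrow> prob_space.expectation M (X k p s) = u p s"
    and dev: "\<And>t p s. t \<in> {1..T} \<Longrightarrow> (p, s) \<in> indices Sp \<Longrightarrow>
       \<exists>B \<in> sets M. measure M B \<ge> 1 - \<delta> / (real (card (indices Sp)) * real T) \<and>
         (\<forall>\<omega>\<in>B. (p, s) \<in> fst (psreg_state Sp m \<epsilon> \<gamma>s (\<lambda>k p s. X k p s \<omega>) (\<lambda>t. epsh t \<omega>) (t - 1))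
                  \<longrightarrow> \<bar>u p s - emp_mean m (\<lambda>k p s. X k p s \<omega>) t p s\<bar> \<le> epsh t \<omega>)"
  shows "\<exists>G \<in> sets M. measure M G \<ge> 1 - \<delta> \<and>
    (\<forall>\<omega>\<in>G. \<forall>uh. psreg Sp m T \<epsilon> \<gamma>s (\<lambda>k p s. X k p s \<omega>) (\<lambda>t. epsh t \<omega>) = Some uh \<longrightarrow>
        Eq Sp u 0 \<subseteq> Eq Sp uh (2 * \<epsilon>) \<and>
        (\<forall>\<gamma>. 0 \<le> \<gamma> \<and> \<gamma> \<le> \<gamma>s \<longrightarrow> Eq Sp uh \<gamma> \<subseteq> Eq Sp u (2 * \<epsilon> + \<gamma>)))"
proof -
  interpret prob_space M by fact
  define J where "J = {1..T} \<times> indices Sp"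
  define c where "c = 1 - \<delta> / (real (card (indices Sp)) * real T)"
  have finP: "finite (profiles Sp)" unfolding profiles_def by (rule finite_PiE) (auto simp: fin)
  have finI: "finite (indices Sp)" unfolding indices_def using finP by simp
  have neP: "profiles Sp \<noteq> {}" unfolding profiles_def using ne by (simp add: PiE_eq_empty_iff)
  have neI: "indices Sp \<noteq> {}" unfolding indices_def using neP by simp
  have finJ: "finite J" unfolding J_def using finI by simp
  have neJ: "J \<noteq> {}" unfolding J_def using neI sched(1) by auto
  have cardJ: "card J = T * card (indices Sp)" unfolding J_def by (simp add: card_cartesian_product)
  have cI: "card (indices Sp) > 0" using finI neI by (simp add: card_gt_0_iff)
  have "\<forall>j\<in>J. \<exists>B\<in>sets M. measure M B \<ge> c \<and>
     (\<forall>\<omega>\<in>B. (fst (snd j), snd (snd j)) \<in> fst (psreg_state Sp m \<epsilon> \<gamma>s (\<lambda>k p s. X k p s \<omega>) (\<lambda>t. epsh t \<omega>) (fst j - 1))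
        \<longrightarrow> \<bar>u (fst (snd j)) (snd (snd j)) - emp_mean m (\<lambda>k p s. X k p s \<omega>) (fst j) (fst (snd j)) (snd (snd j))\<bar> \<le> epsh (fst j) \<omega>)"
  proof
    fix j assume "j \<in> J"
    then obtain t p s where j: "j = (t, p, s)" "t \<in> {1..T}" "(p, s) \<in> indices Sp"
      unfolding J_def by auto
    show "\<exists>B\<in>sets M. measure M B \<ge> c \<and>
     (\<forall>\<omega>\<in>B. (fst (snd j), snd (snd j)) \<in> fst (psreg_state Sp m \<epsilon> \<gamma>s (\<lambda>k p s. X k p s \<omega>) (\<lambda>t. epsh t \<omega>) (fst j - 1))
        \<longrightarrow> \<bar>u (fst (snd j)) (snd (snd j)) - emp_mean m (\<lambda>k p s. X k p s \<omega>) (fst j) (fst (snd j)) (snd (snd j))\<bar> \<le> epsh (fst j) \<omega>)"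
      using dev[OF j(2) j(3)] unfolding j(1) c_def by simp
  qed
  then obtain Bf where Bf: "\<And>j. j \<in> J \<Longrightarrow> Bf j \<in> sets M \<and> measure M (Bf j) \<ge> c \<and>
     (\<forall>\<omega>\<in>Bf j. (fst (snd j), snd (snd j)) \<in> fst (psreg_state Sp m \<epsilon> \<gamma>s (\<lambda>k p s. X k p s \<omega>) (\<lambda>t. epsh t \<omega>) (fst j - 1))
        \<longrightarrow> \<bar>u (fst (snd j)) (snd (snd j)) - emp_mean m (\<lambda>k p s. X k p s \<omega>) (fst j) (fst (snd j)) (snd (snd j))\<bar> \<le> epsh (fst j) \<omega>)"
    by metis
  define G where "G = (\<Inter>j\<in>J. Bf j)"
  have Bs: "\<And>j. j \<in> J \<Longrightarrow> Bf j \<in> sets M" using Bf by blast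
  have Gs: "G \<in> sets M" unfolding G_def using finJ neJ Bs by (intro sets.finite_INT) auto
  have compl: "space M - G = (\<Union>j\<in>J. space M - Bf j)" unfolding G_def using neJ by auto
  have "measure M (space M - G) \<le> (\<Sum>j\<in>J. measure M (space M - Bf j))"
    unfolding compl using finJ Bs by (intro finite_measure_subadditive_finite) auto
  also have "\<dots> = (\<Sum>j\<in>J. 1 - measure M (Bf j))"
    using Bs by (intro sum.cong refl prob_compl) auto
  also have "\<dots> \<le> (\<Sum>j\<in>J. 1 - c)"
    using Bf by (intro sum_mono) auto
  also have "\<dots> = real (card J) * (\<delta> / (real (card (indices Sp)) * real T))"
    unfolding c_def by simp
  also have "\<dots> = \<delta>" unfolding cardJ using cI sched(1) by (simp add: field_simps)
  finally have "measure M (space M - G) \<le> \<delta>" .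
  then have mG: "measure M G \<ge> 1 - \<delta>" using prob_compl[OF Gs] by simp
  show ?thesis
  proof (intro bexI[OF _ Gs] conjI mG ballI allI impI)
    fix \<omega> uh assume w: "\<omega> \<in> G"
      and res: "psreg Sp m T \<epsilon> \<gamma>s (\<lambda>k p s. X k p s \<omega>) (\<lambda>t. epsh t \<omega>) = Some uh"
    have H: "\<bar>u p s - emp_mean m (\<lambda>k p s. X k p s \<omega>) t p s\<bar> \<le> epsh t \<omega>"
      if "t \<in> {1..T}" "s \<in> profiles Sp"
        "(p, s) \<in> fst (psreg_state Sp m \<epsilon> \<gamma>s (\<lambda>k p s. X k p s \<omega>) (\<lambda>t. epsh t \<omega>) (t - 1))" for t p s
    proof -
      have jJ: "(t, p, s) \<in> J" unfolding J_def indices_def using that by auto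
      have "\<omega> \<in> Bf (t, p, s)" using w jJ unfolding G_def by auto
      then show ?thesis using Bf[OF jJ] that(3) by auto
    qed
    have D: "Eq Sp u 0 \<subseteq> Eq Sp uh (2 * \<epsilon>) \<and>
        (\<forall>\<gamma>. 0 \<le> \<gamma> \<and> \<gamma> \<le> \<gamma>s \<longrightarrow> Eq Sp uh \<gamma> \<subseteq> Eq Sp u (2 * \<epsilon> + \<gamma>))"
      by (rule determ[where T=T and m=m and x="\<lambda>k p s. X k p s \<omega>" and e="\<lambda>t. epsh t \<omega>" and u=u and Sp=Sp,
            OF fin ne eps gs H res]) auto
    show "Eq Sp u 0 \<subseteq> Eq Sp uh (2 * \<epsilon>)" using D by blast
    fix \<gamma> assume "0 \<le> \<gamma> \<and> \<gamma> \<le> \<gamma>s"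
    then show "Eq Sp uh \<gamma> \<subseteq> Eq Sp u (2 * \<epsilon> + \<gamma>)" using D by blast
  qed
qed

end
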